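(* Let $G$ be a Polish group and let $H\colon G \to [0,\infty]$ be a graded subgroup which is Baire measurable and not meagre. Then $H$ is upper semi-continuous, and in fact continuous.
   Context: A graded subgroup of $G$ is a function $H\colon G \to [0,\infty]$ such that $H(1_G) = 0$, $H(x) = H(x^{-1})$ for all $x$, and $H(hg) \leq H(h) + H(g)$ for all $g,h\in G$. $H$ is called meagre if there is $r > 0$ such that $\{x \colon H(x) < r\}$ is meagre in $G$. $[0,\infty]$ carries the order topology. *)

theory Defs
  imports "HOL-Analysis.Analysis"
begin

(* Groups are written additively via the type class group_add, which does NOT
   assume commutativity: x + y is the group product, -x the inverse, 0 the identity. *)

definition nowhere_dense :: "'a::topological_space set \<Rightarrow> bool" where
  "nowhere_dense A \<longleftrightarrow> interior (closure A) = {}"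

definition meagre :: "'a::topological_space set \<Rightarrow> bool" where
  "meagre A \<longleftrightarrow> (\<exists>F. countable F \<and> (\<forall>N\<in>F. nowhere_dense N) \<and> A \<subseteq> \<Union>F)"

definition baire_property :: "'a::topological_space set \<Rightarrow> bool" where
  "baire_property A \<longleftrightarrow> (\<exists>U. open U \<and> meagre ((A - U) \<union> (U - A)))"

definition baire_measurable :: "('a::topological_space \<Rightarrow> 'b::topological_space) \<Rightarrow> bool" where
  "baire_measurable f \<longleftrightarrow> (\<forall>V. open V \<longrightarrow> baire_property (f -` V))"

definition graded_subgroup :: "('a::group_add \<Rightarrow> ennreal) \<Rightarrow> bool" where
  "graded_subgroup H \<longleftrightarrow> H 0 = 0 \<and> (\<forall>x. H x = H (- x)) \<and> (\<forall>g h. H (h + g) \<le> H h + H g)"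

definition meagre_graded :: "('a::{group_add,topological_space} \<Rightarrow> ennreal) \<Rightarrow> bool" where
  "meagre_graded H \<longleftrightarrow> (\<exists>r>0. meagre {x. H x < r})"

definition upper_semicontinuous :: "('a::topological_space \<Rightarrow> 'b::linorder_topology) \<Rightarrow> bool" where
  "upper_semicontinuous f \<longleftrightarrow> (\<forall>x c. f x < c \<longrightarrow> eventually (\<lambda>y. f y < c) (nhds x))"

end

theory Submission
  imports Defs
begin

lemma open_not_meagre:
  fixes W :: "'a::polish_space set"
  assumes "open W" "W \<noteq> {}"
  shows "\<not> meagre W"
proof
  assume "meagre W"
  then obtain F where F: "countable F" "\<forall>N\<in>F. nowhere_dense N" "W \<subseteq> \<Union>F"
    unfolding meagre_def by blast
  have "euclidean interior_of \<Union>(closure ` F) = {}"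
  proof (rule Baire_category_alt)
    show "completely_metrizable_space (euclidean::'a topology) \<or> locally_compact_space (euclidean::'a topology) \<and> regular_space (euclidean::'a topology)"
      using completely_metrizable_space_euclidean by blast
    show "countable (closure ` F)" using F by simp
    fix T assume "T \<in> closure ` F"
    then show "closedin euclidean T \<and> euclidean interior_of T = {}"
      using F(2) by (auto simp: nowhere_dense_def)
  qed
  then have "interior (\<Union>(closure ` F)) = {}" by simp
  moreover have "W \<subseteq> interior (\<Union>(closure ` F))"
  proof (intro interior_maximal assms(1) subsetI)
    fix x assume "x \<in> W"
    then obtain N where "N \<in> F" "x \<in> N" using F(3) by blast
    then show "x \<in> \<Union>(closure ` F)" using closure_subset by blast
  qed
  ultimately show False using assms(2) by blast
qed

lemma meagre_subset:
  assumes "meagre B" "A \<subseteq> B" shows "meagre A"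
proof -
  obtain F where F: "countable F" "\<forall>N\<in>F. nowhere_dense N" "B \<subseteq> \<Union>F"
    using assms(1) unfolding meagre_def by blast
  then have "A \<subseteq> \<Union>F" using assms(2) by (rule_tac subset_trans) auto
  with F show ?thesis unfolding meagre_def by (intro exI[of _ F]) simp
qed

lemma meagre_Un: "meagre A \<Longrightarrow> meagre B \<Longrightarrow> meagre (A \<union> B)"
  unfolding meagre_def
proof (elim exE conjE)
  fix F G assume "countable F" "\<forall>N\<in>F. nowhere_dense N" "A \<subseteq> \<Union>F"
    "countable G" "\<forall>N\<in>G. nowhere_dense N" "B \<subseteq> \<Union>G"
  then show "\<exists>F. countable F \<and> (\<forall>N\<in>F. nowhere_dense N) \<and> A \<union> B \<subseteq> \<Union>F"
    by (intro exI[of _ "F \<union> G"]) auto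
qed

lemma cont_transl: "continuous_on S (\<lambda>x::'a::topological_group_add. a + x)"
  by (intro continuous_intros)

lemma open_transl: "open T \<Longrightarrow> open ((\<lambda>x::'a::topological_group_add. a + x) -` T)"
  using continuous_on_open_vimage[OF open_UNIV, of "\<lambda>x. a + x"] cont_transl by auto

lemma closed_transl: "closed T \<Longrightarrow> closed ((\<lambda>x::'a::topological_group_add. a + x) -` T)"
  using continuous_on_closed_vimage[OF closed_UNIV, of "\<lambda>x. a + x"] cont_transl by auto

lemma nowhere_dense_transl:
  fixes N :: "'a::topological_group_add set"
  assumes "nowhere_dense N"
  shows "nowhere_dense ((\<lambda>x. a + x) -` N)"
proof -
  let ?g = "\<lambda>x::'a. a + x"
  have cl: "closed (?g -` closure N)"
    by (rule closed_transl) simp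
  have "closure (?g -` N) \<subseteq> ?g -` closure N"
    using cl closure_subset by (intro closure_minimal) auto
  moreover have "interior (?g -` closure N) = {}"
  proof -
    { fix T assume T: "open T" "T \<subseteq> ?g -` closure N"
      have eq: "?g ` T = (\<lambda>x. -a + x) -` T"
      proof (auto simp: image_def)
        fix x assume "-a + x \<in> T"
        then show "\<exists>y\<in>T. x = a + y"
          by (intro bexI[of _ "-a+x"]) (simp_all add: add.assoc[symmetric])
      qed
      have "open ((\<lambda>x. -a + x) -` T)"
        using T(1) by (rule open_transl)
      then have "open (?g ` T)" using eq by simp
      moreover have "?g ` T \<subseteq> closure N" using T(2) by auto
      ultimately have "?g ` T \<subseteq> interior (closure N)" by (rule interior_maximal[rotated])
      then have "T = {}" using assms by (auto simp: nowhere_dense_def) }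
    then show ?thesis by (metis interior_subset open_interior)
  qed
  ultimately show ?thesis unfolding nowhere_dense_def
    by (metis interior_mono subset_empty)
qed

lemma meagre_transl:
  fixes M :: "'a::topological_group_add set"
  assumes "meagre M"
  shows "meagre ((\<lambda>x. a + x) -` M)"
proof -
  obtain F where F: "countable F" "\<forall>N\<in>F. nowhere_dense N" "M \<subseteq> \<Union>F"
    using assms unfolding meagre_def by blast
  have c: "countable ((\<lambda>N. (\<lambda>x. a + x) -` N) ` F)" using F(1) by simp
  have n: "\<forall>N'\<in>(\<lambda>N. (\<lambda>x. a + x) -` N) ` F. nowhere_dense N'"
    using F(2) nowhere_dense_transl by auto
  have s: "(\<lambda>x. a + x) -` M \<subseteq> \<Union>((\<lambda>N. (\<lambda>x. a + x) -` N) ` F)"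
  proof
    fix x assume "x \<in> (\<lambda>x. a + x) -` M"
    then have "a + x \<in> M" by simp
    then obtain N where "N \<in> F" "a + x \<in> N" using F(3) by auto
    then show "x \<in> \<Union>((\<lambda>N. (\<lambda>x. a + x) -` N) ` F)" by auto
  qed
  show ?thesis unfolding meagre_def using c n s by blast
qed

lemma ennreal_half:
  fixes e :: ennreal
  assumes "e > 0"
  shows "\<exists>r>0. r + r \<le> e"
proof (cases e)
  case (real x)
  then show ?thesis using assms
    by (intro exI[of _ "ennreal (x/2)"]) (auto simp flip: ennreal_plus)
next
  case top
  then show ?thesis by (intro exI[of _ 1]) auto
qed

lemma small_near_zero:
  fixes H :: "'a::{polish_space, topological_group_add} \<Rightarrow> ennreal"
  assumes G: "graded_subgroup H"
    and BM: "baire_measurable H"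
    and NM: "\<not> meagre_graded H"
    and r: "r > 0"
  shows "\<exists>N. open N \<and> 0 \<in> N \<and> (\<forall>w\<in>N. H w < r + r)"
proof -
  define A where "A = {x. H x < r}"
  have "baire_property (H -` {..<r})"
    using BM unfolding baire_measurable_def by auto
  moreover have "H -` {..<r} = A" by (auto simp: A_def)
  ultimately obtain U where U: "open U" "meagre ((A - U) \<union> (U - A))"
    unfolding baire_property_def by auto
  define M where "M = (A - U) \<union> (U - A)"
  have AM: "\<not> meagre A" using NM r unfolding meagre_graded_def A_def by blast
  have "U \<noteq> {}"
  proof
    assume "U = {}"
    then have "M = A" by (auto simp: M_def)
    then show False using AM U(2) M_def by simp
  qed
  then obtain u where u: "u \<in> U" by blast
  define N where "N = (\<lambda>w. w + u) -` U"
  have "open N"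
    unfolding N_def
    using continuous_on_open_vimage[OF open_UNIV, of "\<lambda>w. w + u"] U(1)
    by (auto intro: continuous_intros)
  moreover have "0 \<in> N" using u by (simp add: N_def)
  moreover have "H w < r + r" if w: "w \<in> N" for w
  proof -
    define W where "W = U \<inter> (\<lambda>x. -w + x) -` U"
    have "open W" unfolding W_def using U(1) open_transl by blast
    moreover have "w + u \<in> W" using w u by (simp add: W_def N_def add.assoc[symmetric])
    ultimately have "\<not> meagre W" using open_not_meagre by blast
    moreover have "meagre (M \<union> (\<lambda>x. -w + x) -` M)"
      using U(2) M_def meagre_transl meagre_Un by blast
    ultimately have "\<not> W \<subseteq> M \<union> (\<lambda>x. -w + x) -` M"
      using meagre_subset by blast
    then obtain z where z: "z \<in> W" "z \<notin> M" "-w + z \<notin> M" by blast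
    have zA: "z \<in> A" using z by (auto simp: W_def M_def)
    have zA2: "-w + z \<in> A" using z by (auto simp: W_def M_def)
    have eq: "w = z + - (-w + z)" by (simp add: minus_add add.assoc)
    have "H w \<le> H z + H (- (-w + z))"
      using G unfolding graded_subgroup_def by (subst eq) blast
    also have "H (- (-w + z)) = H (-w + z)"
      using G unfolding graded_subgroup_def by metis
    finally have "H w \<le> H z + H (-w + z)" .
    also have "\<dots> < r + r"
      using zA zA2 unfolding A_def by (auto intro: add_strict_mono)
    finally show ?thesis .
  qed
  ultimately show ?thesis by blast
qed

lemma ennreal_gap: "(a::ennreal) < b \<Longrightarrow> \<exists>e>0. a + e < b"
  by (metis canonically_ordered_monoid_add_class.lessE dense not_gr_zero)

lemma small_eventually:
  fixes H :: "'a::{polish_space, topological_group_add} \<Rightarrow> ennreal"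
  assumes G: "graded_subgroup H"
    and BM: "baire_measurable H"
    and NM: "\<not> meagre_graded H"
    and e: "e > 0"
  shows "eventually (\<lambda>y. H (y + - x) < e) (nhds x)"
proof -
  obtain r where r: "r > 0" "r + r \<le> e" using ennreal_half[OF e] by blast
  obtain N where N: "open N" "0 \<in> N" "\<forall>w\<in>N. H w < r + r"
    using small_near_zero[OF G BM NM r(1)] by blast
  have ev0: "eventually (\<lambda>w. H w < e) (nhds 0)"
    using N r(2) by (intro eventually_nhds[THEN iffD2] exI[of _ N]) (auto intro: less_le_trans)
  have lim: "((\<lambda>y. y + - x) \<longlongrightarrow> 0) (nhds x)"
  proof -
    have "((\<lambda>y. y + - x) \<longlongrightarrow> x + - x) (nhds x)"
      by (intro tendsto_add filterlim_ident tendsto_const)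
    then show ?thesis by simp
  qed
  show ?thesis using eventually_compose_filterlim[OF ev0 lim] .
qed

theorem lemma3p11:
  fixes H :: "'a::{polish_space, topological_group_add} \<Rightarrow> ennreal"
  assumes "graded_subgroup H"
    and "baire_measurable H"
    and "\<not> meagre_graded H"
  shows "upper_semicontinuous H \<and> continuous_on UNIV H"
proof -
  have tri: "H (h + g) \<le> H h + H g" for h g using assms(1) unfolding graded_subgroup_def by blast
  have sym: "H (- z) = H z" for z using assms(1) unfolding graded_subgroup_def by metis
  have upper: "eventually (\<lambda>y. H y < c) (nhds x)" if hx: "H x < c" for x c
  proof -
    obtain d where d: "H x < d" "d < c" using dense[OF hx] by blast
    obtain e where e: "e > 0" "H x + e < d" using ennreal_gap[OF d(1)] by blast
    have fin: "H x \<noteq> \<infinity>" using hx by auto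
    show ?thesis using small_eventually[OF assms e(1), of x]
    proof (rule eventually_mono)
      fix y assume y: "H (y + - x) < e"
      have "H y = H ((y + - x) + x)" by (simp add: add.assoc)
      also have "\<dots> \<le> H (y + - x) + H x" by (rule tri)
      also have "\<dots> < e + H x"
        using y fin ennreal_add_left_cancel_less[of "H x" "H (y + - x)" e] by (simp add: add.commute)
      also have "\<dots> < c" using e d by (simp add: add.commute)
      finally show "H y < c" .
    qed
  qed
  have lower: "eventually (\<lambda>y. c < H y) (nhds x)" if hc: "c < H x" for x c
  proof -
    obtain e where e: "e > 0" "c + e < H x" using ennreal_gap[OF hc] by blast
    have fin: "c \<noteq> \<infinity>" using hc by auto
    show ?thesis using small_eventually[OF assms e(1), of x]
    proof (rule eventually_mono)
      fix y assume y: "H (y + - x) < e"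
      show "c < H y"
      proof (rule ccontr)
        assume "\<not> c < H y"
        then have hy: "H y \<le> c" by simp
        have eqs: "H (x + - y) = H (y + - x)"
          using sym[of "x + - y"] by (simp add: minus_add)
        have "H x = H ((x + - y) + y)" by (simp add: add.assoc)
        also have "\<dots> \<le> H (x + - y) + H y" by (rule tri)
        also have "\<dots> = H (y + - x) + H y" using eqs by simp
        also have "\<dots> \<le> H (y + - x) + c" using hy by (rule add_left_mono)
        also have "\<dots> < e + c"
          using y fin ennreal_add_left_cancel_less[of c "H (y + - x)" e] by (simp add: add.commute)
        also have "\<dots> < H x" using e by (simp add: add.commute)
        finally have "H x < H x" .
        then show False by simp
      qed
    qed
  qed
  have "upper_semicontinuous H"
    unfolding upper_semicontinuous_def using upper by blast
  moreover have "continuous_on UNIV H"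
  proof -
    have "(H \<longlongrightarrow> H x) (nhds x)" for x
      by (rule order_tendstoI) (auto intro: upper lower)
    then have "(H \<longlongrightarrow> H x) (at x within UNIV)" for x
    proof (rule tendsto_mono[rotated])
      show "at x within UNIV \<le> nhds x"
        unfolding le_filter_def eventually_at_filter by (auto elim: eventually_mono)
    qed
    then show ?thesis unfolding continuous_on_def by blast
  qed
  ultimately show ?thesis by blast
qed

end
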